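(* Fix $n$. No two non-isomorphic graphs in $\mathbb{K}^{n_{1},n_{2},\ldots,n_{k}}_{n}=\{K^{n_{1},\ldots,n_{k}}_{n}\mid k\ge2,\ n_i\ge1,\ \sum_{i=1}^{k}n_{i}+1=n\}$ are $D$-cospectral.
   Context: Two connected graphs are $D$-cospectral if their distance matrices have the same spectrum. $K^{n_{1},\ldots,n_{k}}_{n}$ denotes the graph on $n$ vertices having a vertex $v$ of degree $n-1$ such that $G-v$ is the disjoint union of complete graphs $K_{n_1},\dots,K_{n_k}$. *)

theory Defs
  imports "Jordan_Normal_Form.Char_Poly"
begin

definition graph_edges :: "nat \<Rightarrow> (nat \<Rightarrow> nat \<Rightarrow> bool) \<Rightarrow> (nat \<times> nat) set" where
  "graph_edges n A = {(x, y). x < n \<and> y < n \<and> A x y}"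

definition graph_dist :: "nat \<Rightarrow> (nat \<Rightarrow> nat \<Rightarrow> bool) \<Rightarrow> nat \<Rightarrow> nat \<Rightarrow> nat" where
  "graph_dist n A u v = (LEAST d. (u, v) \<in> (graph_edges n A) ^^ d)"

definition dist_matrix :: "nat \<Rightarrow> (nat \<Rightarrow> nat \<Rightarrow> bool) \<Rightarrow> real mat" where
  "dist_matrix n A = mat n n (\<lambda>(i, j). real (graph_dist n A i j))"

text \<open>D-cospectral: distance matrices have the same spectrum (with multiplicities),
  i.e. the same characteristic polynomial.\<close>
definition D_cospectral :: "nat \<Rightarrow> (nat \<Rightarrow> nat \<Rightarrow> bool) \<Rightarrow> (nat \<Rightarrow> nat \<Rightarrow> bool) \<Rightarrow> bool" where
  "D_cospectral n A B \<longleftrightarrow> char_poly (dist_matrix n A) = char_poly (dist_matrix n B)"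

definition graph_iso :: "nat \<Rightarrow> (nat \<Rightarrow> nat \<Rightarrow> bool) \<Rightarrow> (nat \<Rightarrow> nat \<Rightarrow> bool) \<Rightarrow> bool" where
  "graph_iso n A B \<longleftrightarrow> (\<exists>f. bij_betw f {0..<n} {0..<n} \<and>
      (\<forall>x<n. \<forall>y<n. A x y \<longleftrightarrow> B (f x) (f y)))"

text \<open>The graph K_n^{n_1,...,n_k} for ns = [n_1,...,n_k], n = sum ns + 1:
  vertex 0 is adjacent to all others; the i-th block of vertices
  {s_i+1 .. s_i+n_i} (s_i = n_1+...+n_{i-1}) induces a clique K_{n_i}.\<close>
definition in_block :: "nat list \<Rightarrow> nat \<Rightarrow> nat \<Rightarrow> bool" where
  "in_block ns i u \<longleftrightarrow> sum_list (take i ns) < u \<and> u \<le> sum_list (take (Suc i) ns)"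

definition K_adj :: "nat list \<Rightarrow> nat \<Rightarrow> nat \<Rightarrow> bool" where
  "K_adj ns u v \<longleftrightarrow> u \<noteq> v \<and>
     (u = 0 \<or> v = 0 \<or> (\<exists>i<length ns. in_block ns i u \<and> in_block ns i v))"

definition K_family :: "nat \<Rightarrow> nat list set" where
  "K_family n = {ns. length ns \<ge> 2 \<and> (\<forall>m\<in>set ns. m \<ge> 1) \<and> sum_list ns + 1 = n}"

end

theory Submission
  imports Defs
begin

fun Qp :: "nat list \<Rightarrow> real poly" where
  "Qp [] = 1" | "Qp (a # ns) = [:real a, 1:] * Qp ns"
fun Rp :: "nat list \<Rightarrow> real poly" where
  "Rp [] = 0" | "Rp (a # ns) = Polynomial.smult (real a) (Qp ns) + [:real a, 1:] * Rp ns"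
definition Fp :: "nat list \<Rightarrow> real poly" where
  "Fp ns = [:-1,1:] * Qp ns - [:-1,2:] * Rp ns"

lemma Rp_pderiv: "Rp ns = Polynomial.smult (real (length ns)) (Qp ns) - [:0,1:] * pderiv (Qp ns)"
proof (induction ns)
  case Nil then show ?case by simp
next
  case (Cons a ns)
  show ?case
    by (simp add: Cons pderiv_mult pderiv_pCons pderiv_add pderiv_smult algebra_simps smult_add_left)
qed

lemma Qp_deg: "degree (Qp ns) = length ns \<and> coeff (Qp ns) (length ns) = 1"
proof (induction ns)
  case Nil then show ?case by simp
next
  case (Cons a ns)
  have nz: "Qp ns \<noteq> 0" using Cons by auto
  have "degree ([:real a, 1:] * Qp ns) = degree [:real a, 1:] + degree (Qp ns)"
    by (rule degree_mult_eq) (use nz in auto)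
  then have "degree (Qp (a#ns)) = Suc (length ns)"
    using Cons by simp
  moreover have "coeff ([:real a, 1:] * Qp ns) (degree [:real a, 1:] + degree (Qp ns)) = coeff [:real a, 1:] (degree [:real a, 1:]) * coeff (Qp ns) (degree (Qp ns))"
    by (rule coeff_mult_degree_sum)
  then have "coeff (Qp (a#ns)) (Suc (length ns)) = 1"
    using Cons by simp
  ultimately show ?case by simp
qed

lemma Qp_val: "poly (Qp ns) t = prod_list (map (\<lambda>a. t + real a) ns)"
  by (induction ns) (auto simp: algebra_simps)

lemma Rp_val: "t > 0 \<Longrightarrow> poly (Rp ns) t = poly (Qp ns) t * sum_list (map (\<lambda>a. real a / (t + real a)) ns)"
proof (induction ns)
  case Nil then show ?case by simp
next
  case (Cons a ns)
  have "t + real a \<noteq> 0" using Cons.prems by linarith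
  then show ?case using Cons by (simp add: field_simps)
qed

lemma Qp0_pos: "\<forall>m\<in>set ns. m \<ge> 1 \<Longrightarrow> poly (Qp ns) 0 > 0"
  by (induction ns) auto

lemma Fp0: "poly (Fp ns) 0 = (real (length ns) - 1) * poly (Qp ns) 0"
  unfolding Fp_def by (simp add: Rp_pderiv algebra_simps)

lemma ring_aux: "(a::'a::comm_ring) * (x - y) - b * (p - q - c * (r - s)) = a * x - b * (p - c * r) - (a * y - b * (q - c * s))"
  by (simp add: algebra_simps)

lemma Fp_inj:
  assumes len: "length ns = length ms" and F: "Fp ns = Fp ms"
  shows "Qp ns = Qp ms"
proof (rule ccontr)
  assume ne: "Qp ns \<noteq> Qp ms"
  define k where "k = length ns"
  define E where "E = Qp ns - Qp ms"
  have Enz: "E \<noteq> 0" using ne by (simp add: E_def)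
  have L: "[:-1,1:] * E - [:-1,2:] * (Polynomial.smult (real k) E - [:0,1:] * pderiv E) = 0"
  proof -
    have "[:-1,1:] * E - [:-1,2:] * (Polynomial.smult (real k) E - [:0,1:] * pderiv E) = Fp ns - Fp ms"
      unfolding Fp_def Rp_pderiv E_def pderiv_diff smult_diff_right k_def len by (rule ring_aux)
    then show ?thesis using F by simp
  qed
  define d where "d = degree E"
  have ck: "coeff E j = 0" if "j \<ge> k" for j
  proof -
    have "coeff (Qp ns) j = coeff (Qp ms) j"
    proof (cases "j = k")
      case True then show ?thesis using Qp_deg[of ns] Qp_deg[of ms] len k_def by simp
    next
      case False
      then have "j > degree (Qp ns)" "j > degree (Qp ms)" using that Qp_deg[of ns] Qp_deg[of ms] len k_def by auto
      then show ?thesis by (simp add: coeff_eq_0)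
    qed
    then show ?thesis by (simp add: E_def)
  qed
  have "degree E \<le> k" by (rule degree_le) (use ck in auto)
  moreover have "coeff E d \<noteq> 0" using Enz d_def by simp
  ultimately have dk: "d < k" using ck d_def by (metis le_neq_implies_less)
  have c1: "coeff E (Suc d) = 0" by (simp add: coeff_eq_0 d_def)
  have "coeff ([:-1,1:] * E - [:-1,2:] * (Polynomial.smult (real k) E - [:0,1:] * pderiv E)) (Suc d) = 0"
    using L by simp
  then have "coeff E d * (1 + 2 * real d - 2 * real k) = 0"
    using c1 by (cases d) (simp_all add: coeff_pderiv algebra_simps)
  then have "1 + 2 * real d = 2 * real k" using \<open>coeff E d \<noteq> 0\<close> by simp
  then have "1 + 2 * d = 2 * k" by linarith
  then show False by presburger
qed

lemma Qp_nz: "Qp ns \<noteq> 0"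
  using Qp_deg[of ns] by auto

lemma order_lin: "order (- real m) [:real b, 1:] = (if b = m then 1 else 0)"
proof (cases "b = m")
  case True
  have "order (- real m) ([:- (- real m), 1:] ^ 1) = 1" by (rule order_power_n_n)
  then show ?thesis using True by simp
next
  case False
  have "poly [:real b, 1:] (- real m) \<noteq> 0" using False by simp
  then have "order (- real m) [:real b, 1:] = 0" using order_root by blast
  then show ?thesis using False by simp
qed

lemma count_order: "count (mset ns) m = order (- real m) (Qp ns)"
proof (induction ns)
  case Nil
  have "order (- real m) (1::real poly) = 0" by (simp add: order_root)
  then show ?case by simp
next
  case (Cons a ns)
  have "[:real a, 1:] * Qp ns \<noteq> 0" using Qp_nz[of ns] by (metis mult_eq_0_iff pCons_eq_0_iff zero_neq_one)
  then have "order (- real m) ([:real a, 1:] * Qp ns) = order (- real m) [:real a, 1:] + order (- real m) (Qp ns)"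
    by (rule order_mult)
  then show ?case using Cons order_lin[of m a] by auto
qed

lemma Qp_mset: "Qp ns = Qp ms \<Longrightarrow> mset ns = mset ms"
  by (rule multiset_eqI) (simp add: count_order)

lemma sum_ge_len: "\<forall>m\<in>set ns. m \<ge> (1::nat) \<Longrightarrow> length ns \<le> sum_list ns"
  by (induction ns) auto

lemma Fp0_nz: "ns \<in> K_family n \<Longrightarrow> poly (Fp ns) 0 \<noteq> 0"
proof -
  assume "ns \<in> K_family n"
  then have "length ns \<ge> 2" "\<forall>m\<in>set ns. m \<ge> 1" by (auto simp: K_family_def)
  then have "real (length ns) - 1 > 0" "poly (Qp ns) 0 > 0" using Qp0_pos by auto
  then show ?thesis by (simp add: Fp0)
qed

lemma poly_agree:
  assumes "\<And>t::real. t > 0 \<Longrightarrow> poly p t = poly q t"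
  shows "p = q"
proof (rule ccontr)
  assume "p \<noteq> q"
  then have "p - q \<noteq> 0" by simp
  then have "finite {t. poly (p - q) t = 0}" by (rule poly_roots_finite)
  moreover have "{t::real. t > 0} \<subseteq> {t. poly (p - q) t = 0}" using assms by auto
  moreover have "infinite {t::real. t > 0}"
  proof -
    have "{t::real. t > 0} = {0<..}" by auto
    then show ?thesis using infinite_Ioi[of "0::real"] by simp
  qed
  ultimately show False using finite_subset by blast
qed

lemma monom_cancel:
  assumes "monom (1::real) a * p = monom 1 b * q" "poly p 0 \<noteq> 0" "poly q 0 \<noteq> 0"
  shows "a = b"
proof (rule ccontr)
  assume "a \<noteq> b"
  then consider "a < b" | "b < a" by linarith
  then show False
  proof cases
    case 1
    then have "monom (1::real) b = monom 1 a * monom 1 (b - a)" by (simp add: mult_monom)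
    then have "monom 1 a * p = monom 1 a * (monom 1 (b - a) * q)" using assms(1) by (simp add: mult.assoc)
    then have "p = monom 1 (b - a) * q" by simp
    then have "poly p 0 = 0" using 1 by (simp add: poly_monom)
    then show False using assms(2) by simp
  next
    case 2
    then have "monom (1::real) a = monom 1 b * monom 1 (a - b)" by (simp add: mult_monom)
    then have "monom 1 b * q = monom 1 b * (monom 1 (a - b) * p)" using assms(1) by (simp add: mult.assoc)
    then have "q = monom 1 (a - b) * p" by simp
    then have "poly q 0 = 0" using 2 by (simp add: poly_monom)
    then show False using assms(3) by simp
  qed
qed

lemma recover:
  assumes ns: "ns \<in> K_family n" and ms: "ms \<in> K_family n"
    and eq: "\<And>t::real. t > 0 \<Longrightarrow> t ^ (n - length ns - 1) * poly (Fp ns) t = t ^ (n - length ms - 1) * poly (Fp ms) t"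
  shows "mset ns = mset ms"
proof -
  let ?a = "n - length ns - 1" and ?b = "n - length ms - 1"
  have "monom 1 ?a * Fp ns = monom 1 ?b * Fp ms"
    by (rule poly_agree) (use eq in \<open>simp add: poly_monom\<close>)
  then have ab: "?a = ?b" using monom_cancel Fp0_nz[OF ns] Fp0_nz[OF ms] by blast
  have "length ns \<le> sum_list ns" "length ms \<le> sum_list ms" "sum_list ns + 1 = n" "sum_list ms + 1 = n"
    using ns ms sum_ge_len by (auto simp: K_family_def)
  then have len: "length ns = length ms" using ab by linarith
  have "Fp ns = Fp ms" using \<open>monom 1 ?a * Fp ns = monom 1 ?b * Fp ms\<close> ab
    by (simp add: monom_eq_0_iff)
  then show ?thesis using Fp_inj[OF len] Qp_mset by blast
qed

lemma sylvester:
  fixes U V :: "'a :: idom mat"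
  assumes U: "U \<in> carrier_mat N K" and V: "V \<in> carrier_mat K N"
  shows "det (1\<^sub>m N + U * V) = det (1\<^sub>m K + V * U)"
proof -
  let ?P = "four_block_mat (1\<^sub>m N) (-U) V (1\<^sub>m K)"
  let ?P1 = "four_block_mat (1\<^sub>m N) (0\<^sub>m N K) (-V) (1\<^sub>m K)"
  let ?P2 = "four_block_mat (1\<^sub>m N) U (0\<^sub>m K N) (1\<^sub>m K)"
  have cP: "?P \<in> carrier_mat (N+K) (N+K)" and cP1: "?P1 \<in> carrier_mat (N+K) (N+K)"
    and cP2: "?P2 \<in> carrier_mat (N+K) (N+K)" using U V by auto
  have m1: "?P * ?P1 = four_block_mat (1\<^sub>m N + U * V) (-U) (0\<^sub>m K N) (1\<^sub>m K)"
    by (subst mult_four_block_mat[of _ N N _ K _ K]) (use U V in auto)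
  have m2: "?P * ?P2 = four_block_mat (1\<^sub>m N) (0\<^sub>m N K) V (1\<^sub>m K + V * U)"
    by (subst mult_four_block_mat[of _ N N _ K _ K]) (use U V in auto)
  have "det (?P * ?P1) = det (1\<^sub>m N + U * V)"
    unfolding m1 by (subst det_four_block_mat_lower_left_zero[of _ N _ K]) (use U V in auto)
  moreover have "det ?P1 = 1"
    by (subst det_four_block_mat_upper_right_zero[of _ N _ K]) (use U V in auto)
  moreover have "det (?P * ?P2) = det (1\<^sub>m K + V * U)"
    unfolding m2 by (subst det_four_block_mat_upper_right_zero[of _ N _ K]) (use U V in auto)
  moreover have "det ?P2 = 1"
    by (subst det_four_block_mat_lower_left_zero[of _ N _ K]) (use U V in auto)
  ultimately show ?thesis using det_mult[OF cP cP1] det_mult[OF cP cP2] by simp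
qed

lemma ifmul: "(x::real) * (if P then 1 else 0) = (if P then x else 0)" "(if P then 1 else 0) * (x::real) = (if P then x else 0)"
  by auto

lemma stage1:
  fixes g :: "nat \<Rightarrow> nat \<Rightarrow> real" and c :: "nat \<Rightarrow> nat" and t :: real
  assumes t: "t \<noteq> 0" and cK: "\<And>u. u < N \<Longrightarrow> c u < K"
  shows "det (mat N N (\<lambda>(i,j). (if i = j then t else 0) - g (c i) (c j)))
       = t ^ N * det (mat K K (\<lambda>(a,b). (if a = b then 1 else 0) - g a b * real (card {u. u < N \<and> c u = b}) / t))"
proof -
  define U where "U = mat N K (\<lambda>(u,a). if c u = a then (1::real) else 0)"
  define V where "V = mat K N (\<lambda>(a,u). - g a (c u) / t)"
  have cU: "U \<in> carrier_mat N K" and cV: "V \<in> carrier_mat K N" by (auto simp: U_def V_def)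
  have UV: "U * V = mat N N (\<lambda>(i,j). - g (c i) (c j) / t)"
  proof (rule eq_matI)
    fix i j assume ij: "i < dim_row (mat N N (\<lambda>(i,j). - g (c i) (c j) / t))" "j < dim_col (mat N N (\<lambda>(i,j). - g (c i) (c j) / t))"
    then have i: "i < N" and j: "j < N" by auto
    have "(U * V) $$ (i,j) = - g (c i) (c j) / t"
      using i j cK[OF i] unfolding U_def V_def by (simp add: scalar_prod_def ifmul sum_negf sum_divide_distrib[symmetric] sum.delta)
    then show "(U * V) $$ (i,j) = mat N N (\<lambda>(i,j). - g (c i) (c j) / t) $$ (i,j)" using i j by simp
  qed (auto simp: U_def V_def)
  have VU: "V * U = mat K K (\<lambda>(a,b). - g a b * real (card {u. u < N \<and> c u = b}) / t)"
  proof (rule eq_matI)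
    fix a b assume ab: "a < dim_row (mat K K (\<lambda>(a,b). - g a b * real (card {u. u < N \<and> c u = b}) / t))"
       "b < dim_col (mat K K (\<lambda>(a,b). - g a b * real (card {u. u < N \<and> c u = b}) / t))"
    then have a: "a < K" and b: "b < K" by auto
    have "(V * U) $$ (a,b) = (\<Sum>u\<in>{0..<N}. (if c u = b then - g a b / t else 0))"
      using a b unfolding U_def V_def by (auto simp: scalar_prod_def ifmul intro!: sum.cong)
    also have "\<dots> = (\<Sum>u\<in>{u\<in>{0..<N}. c u = b}. - g a b / t)" by (rule sum.inter_filter[symmetric]) simp
    also have "\<dots> = real (card {u. u < N \<and> c u = b}) * (- g a b / t)"
    proof -
      have "{u\<in>{0..<N}. c u = b} = {u. u < N \<and> c u = b}" by auto
      then show ?thesis by simp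
    qed
    finally show "(V * U) $$ (a,b) = mat K K (\<lambda>(a,b). - g a b * real (card {u. u < N \<and> c u = b}) / t) $$ (a,b)"
      using a b by simp
  qed (auto simp: U_def V_def)
  have M: "mat N N (\<lambda>(i,j). (if i = j then t else 0) - g (c i) (c j)) = t \<cdot>\<^sub>m (1\<^sub>m N + U * V)"
    unfolding UV by (rule eq_matI) (use t in \<open>auto simp: field_simps\<close>)
  have M2: "1\<^sub>m K + V * U = mat K K (\<lambda>(a,b). (if a = b then 1 else 0) - g a b * real (card {u. u < N \<and> c u = b}) / t)"
    unfolding VU by (rule eq_matI) auto
  have dV: "dim_col (U * V) = N" using cU cV by simp
  show ?thesis unfolding M det_smult using sylvester[OF cU cV] M2 dV by simp
qed

lemma det2:
  fixes A :: "'a :: comm_ring_1 mat"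
  assumes A: "A \<in> carrier_mat 2 2"
  shows "det A = A $$ (0,0) * A $$ (1,1) - A $$ (0,1) * A $$ (1,0)"
proof -
  have "det A = (\<Sum>j<2. A $$ (0,j) * cofactor A 0 j)" by (rule laplace_expansion_row[OF A]) simp
  also have "\<dots> = A $$ (0,0) * cofactor A 0 0 + A $$ (0,1) * cofactor A 0 1"
    by (simp add: numeral_2_eq_2)
  also have "cofactor A 0 0 = A $$ (1,1)"
  proof -
    have "mat_delete A 0 0 \<in> carrier_mat 1 1" using mat_delete_carrier[OF A] by simp
    then show ?thesis unfolding cofactor_def using A
      by (simp add: det_single mat_delete_def)
  qed
  also have "cofactor A 0 1 = - A $$ (1,0)"
  proof -
    have "mat_delete A 0 1 \<in> carrier_mat 1 1" using mat_delete_carrier[OF A] by simp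
    then show ?thesis unfolding cofactor_def using A
      by (simp add: det_single mat_delete_def)
  qed
  finally show ?thesis by (simp add: algebra_simps)
qed

lemma sum_split0: "0 < (K::nat) \<Longrightarrow> (\<Sum>b\<in>{0..<K}. f b) = f 0 + (\<Sum>b\<in>{1..<K}. f b)"
  using sum.atLeast_Suc_lessThan[of 0 K f] by simp

lemma dcancel: "(d::real) \<noteq> 0 \<Longrightarrow> d * (e + x / d) = d * e + x"
  by (simp add: field_simps)

lemma mat_r_rows: "X \<in> carrier_mat n n \<Longrightarrow> mat\<^sub>r n n (\<lambda>a. row X a) = X"
  by (rule eq_matI) auto

lemma stage2:
  fixes s :: "nat \<Rightarrow> real" and t :: real
  assumes t: "t > 0" and s: "\<And>a. s a \<ge> 0" and K: "K > 0"
  defines "\<tau> \<equiv> s 0 / (t + s 0)" and "\<rho> \<equiv> (\<Sum>b\<in>{1..<K}. s b / (t + s b))"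
  shows "det (mat K K (\<lambda>(a,b). (if a = b then 1 else 0) - (if a = b then 1 else if a = 0 \<or> b = 0 then 1 else 2) * s b / t))
     = (\<Prod>a\<in>{0..<K}. 1 + s a / t) * ((1 - 2 * (\<tau> + \<rho>) + \<tau>) * (1 - \<tau>) + \<tau> * (\<rho> - \<tau>))"
proof -
  define d where "d a = 1 + s a / t" for a
  have dpos: "d a > 0" for a using t s[of a] by (simp add: d_def add_pos_nonneg)
  have dw: "s b / t / d b = s b / (t + s b)" for b using t dpos[of b] by (simp add: d_def field_simps)
  have tdb: "t * d b = t + s b" for b using t by (simp add: d_def field_simps)
  define U where "U = mat K 2 (\<lambda>(a,p). (if p = 0 then 1 else if a = 0 then 1 else 0) / d a)"
  define V where "V = mat 2 K (\<lambda>(p,b). - (if p = 0 then (if b = 0 then 1 else 2) else (if b = 0 then 1 else -1)) * s b / t)"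
  have cU: "U \<in> carrier_mat K 2" and cV: "V \<in> carrier_mat 2 K" by (auto simp: U_def V_def)
  have UV: "(U * V) $$ (a,b) = - (if a = 0 then (if b = 0 then 2 else 1) else (if b = 0 then 1 else 2)) * s b / t / d a"
    if "a < K" "b < K" for a b
    using that unfolding U_def V_def by (auto simp: scalar_prod_def numeral_2_eq_2 field_simps)
  have B: "mat K K (\<lambda>(a,b). (if a = b then 1 else 0) - (if a = b then 1 else if a = 0 \<or> b = 0 then 1 else 2) * s b / t)
      = mat\<^sub>r K K (\<lambda>a. d a \<cdot>\<^sub>v row (1\<^sub>m K + U * V) a)"
  proof (rule eq_matI)
    fix a b assume "a < dim_row (mat\<^sub>r K K (\<lambda>a. d a \<cdot>\<^sub>v row (1\<^sub>m K + U * V) a))"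
      "b < dim_col (mat\<^sub>r K K (\<lambda>a. d a \<cdot>\<^sub>v row (1\<^sub>m K + U * V) a))"
    then have a: "a < K" and b: "b < K" by auto
    have "mat\<^sub>r K K (\<lambda>a. d a \<cdot>\<^sub>v row (1\<^sub>m K + U * V) a) $$ (a,b) = d a * ((if a = b then 1 else 0) + (U * V) $$ (a,b))"
      using a b cU cV by (simp add: mat_of_rows_def)
    also have "\<dots> = (if a = b then 1 else 0) - (if a = b then 1 else if a = 0 \<or> b = 0 then 1 else 2) * s b / t"
    proof -
      have "d a * ((if a = b then 1 else 0) + (U * V) $$ (a,b)) = d a * (if a = b then 1 else 0) - (if a = 0 then (if b = 0 then 2 else 1) else (if b = 0 then 1 else 2)) * s b / t"
        unfolding UV[OF a b] using dpos[of a] by (subst dcancel) auto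
      moreover have "t + s a > 0" "t + s b > 0" using t s[of a] s[of b] by auto
      then have "d a * (if a = b then 1 else 0) - (if a = 0 then (if b = 0 then 2 else 1) else (if b = 0 then 1 else 2)) * s b / t = (if a = b then 1 else 0) - (if a = b then 1 else if a = 0 \<or> b = 0 then 1 else 2) * s b / t"
        using t by (cases "a = b") (auto simp: d_def field_simps)
      ultimately show ?thesis by simp
    qed
    finally show "mat K K (\<lambda>(a,b). (if a = b then 1 else 0) - (if a = b then 1 else if a = 0 \<or> b = 0 then 1 else 2) * s b / t) $$ (a,b)
       = mat\<^sub>r K K (\<lambda>a. d a \<cdot>\<^sub>v row (1\<^sub>m K + U * V) a) $$ (a,b)" using a b by simp
  qed auto
  have cX: "1\<^sub>m K + U * V \<in> carrier_mat K K" using cU cV by auto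
  have detB: "det (mat\<^sub>r K K (\<lambda>a. d a \<cdot>\<^sub>v row (1\<^sub>m K + U * V) a)) = prod d {0..<K} * det (1\<^sub>m K + U * V)"
  proof -
    have "det (mat\<^sub>r K K (\<lambda>a. d a \<cdot>\<^sub>v row (1\<^sub>m K + U * V) a)) = prod d {0..<K} * det (mat\<^sub>r K K (\<lambda>a. row (1\<^sub>m K + U * V) a))"
      by (rule det_rows_mul) (use cX in auto)
    moreover have "mat\<^sub>r K K (\<lambda>a. row (1\<^sub>m K + U * V) a) = 1\<^sub>m K + U * V"
      by (rule mat_r_rows[OF cX])
    ultimately show ?thesis by simp
  qed
  have VUe: "(V * U) $$ (p,q) = (\<Sum>b\<in>{0..<K}. V $$ (p,b) * U $$ (b,q))" if "p < 2" "q < 2" for p q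
    using that cU cV by (simp add: scalar_prod_def)
  have w: "V $$ (p,b) * U $$ (b,q) = - (if p = 0 then (if b = 0 then 1 else 2) else (if b = 0 then 1 else -1)) * (if q = 0 then 1 else if b = 0 then 1 else 0) * (s b / (t + s b))"
    if "p < 2" "q < 2" "b < K" for p q b
    using that dw[of b] tdb[of b] tdb[of 0] unfolding U_def V_def by (simp add: field_simps)
  have e00: "(V * U) $$ (0,0) = - (\<tau> + 2 * \<rho>)"
  proof -
    have "(V * U) $$ (0,0) = (\<Sum>b\<in>{0..<K}. V $$ (0,b) * U $$ (b,0))" by (rule VUe) auto
    also have "\<dots> = - (\<tau> + 2 * \<rho>)" unfolding \<tau>_def \<rho>_def
      by (subst sum_split0[OF K]) (simp add: w K sum_negf sum_distrib_left)
    finally show ?thesis .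
  qed
  have e01: "(V * U) $$ (0,1) = - \<tau>"
  proof -
    have "(V * U) $$ (0,1) = (\<Sum>b\<in>{0..<K}. V $$ (0,b) * U $$ (b,1))" by (rule VUe) auto
    also have "\<dots> = - \<tau>" unfolding \<tau>_def \<rho>_def
      by (subst sum_split0[OF K]) (simp add: w K )
    finally show ?thesis .
  qed
  have e10: "(V * U) $$ (1,0) = \<rho> - \<tau>"
  proof -
    have "(V * U) $$ (1,0) = (\<Sum>b\<in>{0..<K}. V $$ (1,b) * U $$ (b,0))" by (rule VUe) auto
    also have "\<dots> = \<rho> - \<tau>" unfolding \<tau>_def \<rho>_def
      by (subst sum_split0[OF K]) (simp add: w K sum_negf sum_distrib_left)
    finally show ?thesis .
  qed
  have e11: "(V * U) $$ (1,1) = - \<tau>"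
  proof -
    have "(V * U) $$ (1,1) = (\<Sum>b\<in>{0..<K}. V $$ (1,b) * U $$ (b,1))" by (rule VUe) auto
    also have "\<dots> = - \<tau>" unfolding \<tau>_def \<rho>_def
      by (subst sum_split0[OF K]) (simp add: w K )
    finally show ?thesis .
  qed
  have cW: "1\<^sub>m 2 + V * U \<in> carrier_mat 2 2" using cU cV by auto
  have f00: "(1\<^sub>m 2 + V * U) $$ (0,0) = 1 - (\<tau> + 2 * \<rho>)"
    using cU cV e00 by (subst index_add_mat) auto
  have f01: "(1\<^sub>m 2 + V * U) $$ (0,1) = - \<tau>"
    using cU cV e01 by (subst index_add_mat) auto
  have f10: "(1\<^sub>m 2 + V * U) $$ (1,0) = \<rho> - \<tau>"
    using cU cV e10 by (subst index_add_mat) auto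
  have f11: "(1\<^sub>m 2 + V * U) $$ (1,1) = 1 - \<tau>"
    using cU cV e11 by (subst index_add_mat) auto
  have "det (1\<^sub>m 2 + V * U) = (1 - 2 * (\<tau> + \<rho>) + \<tau>) * (1 - \<tau>) + \<tau> * (\<rho> - \<tau>)"
    unfolding det2[OF cW] f00 f01 f10 f11 by (simp add: algebra_simps)
  moreover have "det (mat K K (\<lambda>(a,b). (if a = b then 1 else 0) - (if a = b then 1 else if a = 0 \<or> b = 0 then 1 else 2) * s b / t)) = prod d {0..<K} * det (1\<^sub>m 2 + V * U)"
    unfolding B detB sylvester[OF cU cV] ..
  ultimately show ?thesis by (simp add: d_def)
qed

definition blk :: "nat list \<Rightarrow> nat \<Rightarrow> nat" where
  "blk ns u = (LEAST i. u \<le> sum_list (take (Suc i) ns))"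
definition cls :: "nat list \<Rightarrow> nat \<Rightarrow> nat" where
  "cls ns u = (if u = 0 then 0 else Suc (blk ns u))"

lemma take_sum_mono: "i \<le> j \<Longrightarrow> sum_list (take i ns) \<le> sum_list (take j (ns::nat list))"
proof -
  assume "i \<le> j"
  then obtain m where "j = i + m" using le_Suc_ex by blast
  then show ?thesis by (simp add: take_add)
qed

lemma blk_in:
  assumes "0 < u" "u \<le> sum_list ns"
  shows "in_block ns (blk ns u) u \<and> blk ns u < length ns"
proof -
  let ?P = "\<lambda>i. u \<le> sum_list (take (Suc i) ns)"
  have ex: "?P (length ns)" using assms by simp
  have P: "?P (blk ns u)" unfolding blk_def by (rule LeastI[of ?P, OF ex])
  have lo: "sum_list (take (blk ns u) ns) < u"
  proof (cases "blk ns u")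
    case 0 then show ?thesis using assms by simp
  next
    case (Suc b)
    have "b < blk ns u" using Suc by simp
    then have "\<not> ?P b" unfolding blk_def by (rule not_less_Least)
    then show ?thesis using Suc by simp
  qed
  have "blk ns u < length ns"
  proof (rule ccontr)
    assume "\<not> blk ns u < length ns"
    then have "take (blk ns u) ns = ns" by simp
    then show False using lo assms by simp
  qed
  then show ?thesis using P lo unfolding in_block_def by simp
qed

lemma in_block_unique: "in_block ns i u \<Longrightarrow> in_block ns j u \<Longrightarrow> i = j"
proof (rule ccontr)
  assume a: "in_block ns i u" "in_block ns j u" "i \<noteq> j"
  show False
  proof (cases "i < j")
    case True
    then have "sum_list (take (Suc i) ns) \<le> sum_list (take j ns)" by (intro take_sum_mono) simp
    then show False using a unfolding in_block_def by simp
  next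
    case False
    then have "sum_list (take (Suc j) ns) \<le> sum_list (take i ns)" using a(3) by (intro take_sum_mono) simp
    then show False using a unfolding in_block_def by simp
  qed
qed

lemma in_block_range: "in_block ns i u \<Longrightarrow> 0 < u \<and> u \<le> sum_list ns \<and> i < length ns"
proof -
  assume a: "in_block ns i u"
  have "sum_list (take (Suc i) ns) \<le> sum_list ns"
    using take_sum_mono[of "Suc i" "length ns" ns] by (cases "Suc i \<le> length ns") auto
  moreover have "i < length ns"
  proof (rule ccontr)
    assume "\<not> i < length ns" then show False using a unfolding in_block_def by simp
  qed
  ultimately show ?thesis using a unfolding in_block_def by auto
qed

lemma in_block_blk: "in_block ns i u \<Longrightarrow> blk ns u = i"
  using in_block_unique blk_in in_block_range by metis

lemma K_adj_cls:
  assumes "u \<le> sum_list ns" "v \<le> sum_list ns"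
  shows "K_adj ns u v \<longleftrightarrow> u \<noteq> v \<and> (u = 0 \<or> v = 0 \<or> cls ns u = cls ns v)"
proof -
  have "(\<exists>i<length ns. in_block ns i u \<and> in_block ns i v) \<longleftrightarrow> cls ns u = cls ns v" if "u \<noteq> 0" "v \<noteq> 0"
  proof
    assume "\<exists>i<length ns. in_block ns i u \<and> in_block ns i v"
    then show "cls ns u = cls ns v" using in_block_blk that by (auto simp: cls_def)
  next
    assume "cls ns u = cls ns v"
    then have "blk ns u = blk ns v" using that by (simp add: cls_def)
    then show "\<exists>i<length ns. in_block ns i u \<and> in_block ns i v"
      using blk_in[of u ns] blk_in[of v ns] that assms by auto
  qed
  then show ?thesis unfolding K_adj_def by auto
qed

lemma cls_lt: "u \<le> sum_list ns \<Longrightarrow> cls ns u < Suc (length ns)"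
  using blk_in[of u ns] by (auto simp: cls_def)

lemma cls_card0: "card {u. u < Suc (sum_list ns) \<and> cls ns u = 0} = 1"
proof -
  have "{u. u < Suc (sum_list ns) \<and> cls ns u = 0} = {0}" by (auto simp: cls_def)
  then show ?thesis by simp
qed

lemma cls_cardS:
  assumes j: "j < length ns"
  shows "card {u. u < Suc (sum_list ns) \<and> cls ns u = Suc j} = ns ! j"
proof -
  have "{u. u < Suc (sum_list ns) \<and> cls ns u = Suc j} = {sum_list (take j ns)<..sum_list (take (Suc j) ns)}"
  proof (rule equalityI; rule subsetI)
    fix u assume "u \<in> {u. u < Suc (sum_list ns) \<and> cls ns u = Suc j}"
    then have "u \<noteq> 0" "u \<le> sum_list ns" "blk ns u = j" by (auto simp: cls_def split: if_splits)
    then have "in_block ns j u" using blk_in[of u ns] by auto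
    then show "u \<in> {sum_list (take j ns)<..sum_list (take (Suc j) ns)}" by (simp add: in_block_def)
  next
    fix u assume "u \<in> {sum_list (take j ns)<..sum_list (take (Suc j) ns)}"
    then have ib: "in_block ns j u" by (simp add: in_block_def)
    then show "u \<in> {u. u < Suc (sum_list ns) \<and> cls ns u = Suc j}"
      using in_block_range[OF ib] in_block_blk[OF ib] by (auto simp: cls_def)
  qed
  moreover have "sum_list (take (Suc j) ns) = sum_list (take j ns) + ns ! j"
    using j by (simp add: take_Suc_conv_app_nth)
  ultimately show ?thesis by simp
qed

definition gK :: "nat \<Rightarrow> nat \<Rightarrow> real" where
  "gK a b = (if a = b then 1 else if a = 0 \<or> b = 0 then 1 else 2)"

lemma dist_K:
  assumes n: "n = Suc (sum_list ns)" and u: "u < n" and v: "v < n"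
  shows "graph_dist n (K_adj ns) u v = (if u = v then 0 else if K_adj ns u v then 1 else 2)"
proof -
  let ?E = "graph_edges n (K_adj ns)"
  have E: "(x, y) \<in> ?E \<longleftrightarrow> K_adj ns x y" if "x < n" "y < n" for x y
    using that by (simp add: graph_edges_def)
  show ?thesis
  proof (cases "u = v")
    case True
    then have "(u, v) \<in> ?E ^^ 0" by simp
    then show ?thesis using True unfolding graph_dist_def by (simp add: Least_eq_0)
  next
    case neq: False
    have not0: "(u, v) \<notin> ?E ^^ 0" using neq by simp
    show ?thesis
    proof (cases "K_adj ns u v")
      case True
      then have in1: "(u, v) \<in> ?E ^^ 1" using E u v by simp
      have "(LEAST d. (u, v) \<in> ?E ^^ d) = 1"
      proof (rule Least_equality)
        show "(u, v) \<in> ?E ^^ 1" by (rule in1)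
        fix d assume "(u, v) \<in> ?E ^^ d" then show "1 \<le> d" using not0 by (cases d) auto
      qed
      then show ?thesis using neq True unfolding graph_dist_def by simp
    next
      case False
      have u0: "u \<noteq> 0" and v0: "v \<noteq> 0" using False neq by (auto simp: K_adj_def)
      have "(u, 0) \<in> ?E" "(0, v) \<in> ?E" using E[of u 0] E[of 0 v] u v u0 v0 n by (auto simp: K_adj_def)
      then have "(u, v) \<in> ?E O ?E" by blast
      moreover have "?E ^^ 2 = ?E O ?E" by (simp add: numeral_2_eq_2)
      ultimately have in2: "(u, v) \<in> ?E ^^ 2" by simp
      have not1: "(u, v) \<notin> ?E ^^ 1" using E u v False by simp
      have "(LEAST d. (u, v) \<in> ?E ^^ d) = 2"
      proof (rule Least_equality)
        show "(u, v) \<in> ?E ^^ 2" by (rule in2)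
        fix d assume "(u, v) \<in> ?E ^^ d" then show "2 \<le> d" using not0 not1
          by (cases d; cases "d - 1") auto
      qed
      then show ?thesis using neq False unfolding graph_dist_def by simp
    qed
  qed
qed

lemma dist_matrix_K:
  assumes n: "n = Suc (sum_list ns)"
  shows "dist_matrix n (K_adj ns) = mat n n (\<lambda>(i,j). if i = j then 0 else gK (cls ns i) (cls ns j))"
proof (rule eq_matI)
  fix i j assume "i < dim_row (mat n n (\<lambda>(i,j). if i = j then 0 else gK (cls ns i) (cls ns j)))"
    "j < dim_col (mat n n (\<lambda>(i,j). if i = j then 0 else gK (cls ns i) (cls ns j)))"
  then have i: "i < n" and j: "j < n" by auto
  have adj: "K_adj ns i j \<longleftrightarrow> i \<noteq> j \<and> (i = 0 \<or> j = 0 \<or> cls ns i = cls ns j)"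
    using K_adj_cls[of i ns j] i j n by simp
  have c0: "cls ns x = 0 \<longleftrightarrow> x = 0" for x by (simp add: cls_def)
  show "dist_matrix n (K_adj ns) $$ (i, j) = mat n n (\<lambda>(i,j). if i = j then 0 else gK (cls ns i) (cls ns j)) $$ (i, j)"
    using i j unfolding dist_matrix_def gK_def by (auto simp: c0 dist_K[OF n i j] adj)
qed (auto simp: dist_matrix_def)

lemma prod_t: "t > 0 \<Longrightarrow> (\<Prod>j\<in>{0..<length ns}. 1 + real (ns ! j) / t) * t ^ length ns = poly (Qp ns) t"
proof -
  assume t: "t > 0"
  have "(\<Prod>j\<in>{0..<length ns}. 1 + real (ns ! j) / t) = prod_list (map (\<lambda>a. 1 + real a / t) ns)"
    by (simp add: prod.list_conv_set_nth)
  moreover have "prod_list (map (\<lambda>a. 1 + real a / t) ns) * t ^ length ns = prod_list (map (\<lambda>a. t + real a) ns)"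
    using t by (induction ns) (auto simp: field_simps)
  ultimately show ?thesis by (simp add: Qp_val)
qed

lemma charpoly_K:
  assumes ns: "ns \<in> K_family n" and t: "t > 0"
  shows "poly (char_poly (dist_matrix n (K_adj ns))) (t - 1) = t ^ (n - length ns - 1) * poly (Fp ns) t"
proof -
  define k where "k = length ns"
  have n: "n = Suc (sum_list ns)" using ns by (simp add: K_family_def)
  have kS: "k \<le> sum_list ns" using ns sum_ge_len unfolding k_def K_family_def by auto
  define M where "M = mat n n (\<lambda>(i,j). (if i = j then t else 0) - gK (cls ns i) (cls ns j))"
  have DM: "dist_matrix n (K_adj ns) = mat n n (\<lambda>(i,j). if i = j then 0 else gK (cls ns i) (cls ns j))"
    by (rule dist_matrix_K[OF n])
  have cD: "dist_matrix n (K_adj ns) \<in> carrier_mat n n" by (simp add: DM)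
  have s1: "poly (char_poly (dist_matrix n (K_adj ns))) (t - 1) = det M"
    unfolding char_poly_def
  proof (rule poly_det_cong[of M n])
    show "M \<in> carrier_mat n n" by (simp add: M_def)
    show "char_poly_matrix (dist_matrix n (K_adj ns)) \<in> carrier_mat n n" using cD by simp
    fix i j assume i: "i < n" and j: "j < n"
    show "poly (char_poly_matrix (dist_matrix n (K_adj ns)) $$ (i, j)) (t - 1) = M $$ (i, j)"
      using i j unfolding char_poly_matrix_def DM M_def by (auto simp: gK_def)
  qed
  define s where "s b = (if b = 0 then 1 else real (ns ! (b - 1)))" for b
  have s2: "det M = t ^ n * det (mat (Suc k) (Suc k) (\<lambda>(a,b). (if a = b then 1 else 0) - gK a b * real (card {u. u < n \<and> cls ns u = b}) / t))"
    unfolding M_def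
    by (rule stage1) (use t cls_lt n k_def in auto)
  have s3: "mat (Suc k) (Suc k) (\<lambda>(a,b). (if a = b then 1 else 0) - gK a b * real (card {u. u < n \<and> cls ns u = b}) / t)
     = mat (Suc k) (Suc k) (\<lambda>(a,b). (if a = b then 1 else 0) - (if a = b then 1 else if a = 0 \<or> b = 0 then 1 else 2) * s b / t)"
  proof (rule eq_matI)
    fix a b assume "a < dim_row (mat (Suc k) (Suc k) (\<lambda>(a,b). (if a = b then 1 else 0) - (if a = b then 1 else if a = 0 \<or> b = 0 then 1 else 2) * s b / t))"
      "b < dim_col (mat (Suc k) (Suc k) (\<lambda>(a,b). (if a = b then 1 else 0) - (if a = b then 1 else if a = 0 \<or> b = 0 then 1 else 2) * s b / t))"
    then have a: "a < Suc k" and b: "b < Suc k" by auto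
    have "real (card {u. u < n \<and> cls ns u = b}) = s b"
    proof (cases b)
      case 0 then show ?thesis using cls_card0[of ns] n by (simp add: s_def)
    next
      case (Suc j)
      then have "j < length ns" using b k_def by simp
      then show ?thesis using cls_cardS[of j ns] n Suc by (simp add: s_def)
    qed
    then show "mat (Suc k) (Suc k) (\<lambda>(a,b). (if a = b then 1 else 0) - gK a b * real (card {u. u < n \<and> cls ns u = b}) / t) $$ (a,b)
      = mat (Suc k) (Suc k) (\<lambda>(a,b). (if a = b then 1 else 0) - (if a = b then 1 else if a = 0 \<or> b = 0 then 1 else 2) * s b / t) $$ (a,b)"
      using a b by (simp add: gK_def)
  qed auto
  define \<tau> where "\<tau> = s 0 / (t + s 0)"
  define \<rho> where "\<rho> = (\<Sum>b\<in>{1..<Suc k}. s b / (t + s b))"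
  have s4: "det (mat (Suc k) (Suc k) (\<lambda>(a,b). (if a = b then 1 else 0) - (if a = b then 1 else if a = 0 \<or> b = 0 then 1 else 2) * s b / t))
     = (\<Prod>a\<in>{0..<Suc k}. 1 + s a / t) * ((1 - 2 * (\<tau> + \<rho>) + \<tau>) * (1 - \<tau>) + \<tau> * (\<rho> - \<tau>))"
    unfolding \<tau>_def \<rho>_def by (rule stage2) (use t in \<open>auto simp: s_def\<close>)
  define r where "r = sum_list (map (\<lambda>a. real a / (t + real a)) ns)"
  have rho: "\<rho> = r"
  proof -
    have "\<rho> = (\<Sum>j\<in>{0..<k}. s (Suc j) / (t + s (Suc j)))"
      unfolding \<rho>_def using sum.shift_bounds_Suc_ivl[of "\<lambda>b. s b / (t + s b)" 0 k] by simp
    also have "\<dots> = r" unfolding r_def k_def s_def by (simp add: sum.list_conv_set_nth)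
    finally show ?thesis .
  qed
  have tau: "\<tau> = 1 / (t + 1)" by (simp add: \<tau>_def s_def)
  have prodS: "(\<Prod>a\<in>{0..<Suc k}. 1 + s a / t) * t ^ Suc k = (t + 1) * poly (Qp ns) t"
  proof -
    have "(\<Prod>a\<in>{0..<Suc k}. 1 + s a / t) = (1 + 1 / t) * (\<Prod>j\<in>{0..<k}. 1 + real (ns ! j) / t)"
      by (subst prod.atLeast0_lessThan_Suc_shift) (simp add: s_def)
    then show ?thesis using prod_t[OF t, of ns] t unfolding k_def by (simp add: field_simps)
  qed
  have Fv: "poly (Fp ns) t = (t - 1) * poly (Qp ns) t - (2 * t - 1) * (poly (Qp ns) t * r)"
    unfolding Fp_def r_def using Rp_val[OF t, of ns] by (simp add: algebra_simps)
  have br: "(t + 1) * ((1 - 2 * (\<tau> + r) + \<tau>) * (1 - \<tau>) + \<tau> * (r - \<tau>)) = (t - 1) - (2 * t - 1) * r"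
  proof -
    have h: "(t + 1) * \<tau> = 1" unfolding tau using t by simp
    have "(t + 1) * ((1 - 2 * (\<tau> + r) + \<tau>) * (1 - \<tau>) + \<tau> * (r - \<tau>)) = (t + 1) * (1 - 2 * r) + ((t + 1) * \<tau>) * (3 * r - 2)"
      by (simp add: algebra_simps power2_eq_square)
    also have "\<dots> = (t - 1) - (2 * t - 1) * r" unfolding h by (simp add: algebra_simps)
    finally show ?thesis .
  qed
  have tn: "t ^ n = t ^ (n - k - 1) * t ^ Suc k" using kS n by (simp flip: power_add)
  have "poly (char_poly (dist_matrix n (K_adj ns))) (t - 1)
      = t ^ (n - k - 1) * ((\<Prod>a\<in>{0..<Suc k}. 1 + s a / t) * t ^ Suc k) * ((1 - 2 * (\<tau> + r) + \<tau>) * (1 - \<tau>) + \<tau> * (r - \<tau>))"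
    unfolding s1 s2 s3 s4 rho tn by (simp only: mult_ac)
  also have "\<dots> = t ^ (n - k - 1) * poly (Qp ns) t * ((t + 1) * ((1 - 2 * (\<tau> + r) + \<tau>) * (1 - \<tau>) + \<tau> * (r - \<tau>)))"
    unfolding prodS by (simp only: mult_ac)
  also have "\<dots> = t ^ (n - k - 1) * poly (Fp ns) t"
    unfolding br Fv by (simp add: algebra_simps)
  finally show ?thesis unfolding k_def .
qed

lemma iso_refl: "graph_iso n A A"
  unfolding graph_iso_def by (rule exI[of _ id]) auto

lemma iso_trans: "graph_iso n A B \<Longrightarrow> graph_iso n B C \<Longrightarrow> graph_iso n A C"
proof -
  assume "graph_iso n A B" "graph_iso n B C"
  then obtain f g where f: "bij_betw f {0..<n} {0..<n}" "\<forall>x<n. \<forall>y<n. A x y \<longleftrightarrow> B (f x) (f y)"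
    and g: "bij_betw g {0..<n} {0..<n}" "\<forall>x<n. \<forall>y<n. B x y \<longleftrightarrow> C (g x) (g y)"
    unfolding graph_iso_def by blast
  have "bij_betw (g \<circ> f) {0..<n} {0..<n}" using f(1) g(1) by (rule bij_betw_trans)
  moreover have "\<forall>x<n. \<forall>y<n. A x y \<longleftrightarrow> C ((g \<circ> f) x) ((g \<circ> f) y)"
  proof (intro allI impI)
    fix x y assume "x < n" "y < n"
    then have "f x < n" "f y < n" using bij_betwE[OF f(1)] by auto
    then show "A x y \<longleftrightarrow> C ((g \<circ> f) x) ((g \<circ> f) y)" using f(2) g(2) \<open>x < n\<close> \<open>y < n\<close> by simp
  qed
  ultimately show ?thesis unfolding graph_iso_def by blast
qed

lemma take_sum_swap:
  "sum_list (take i (xs @ a # b # ys)) =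
    (if i \<le> length xs then sum_list (take i xs) else if i = Suc (length xs) then sum_list xs + a
     else sum_list xs + a + b + sum_list (take (i - length xs - 2) ys))"
proof -
  consider (c1) "i \<le> length xs" | (c2) "i = Suc (length xs)" | (c3) "i \<ge> length xs + 2" by linarith
  then show ?thesis
  proof cases
    case c1 then show ?thesis by simp
  next
    case c2 then show ?thesis by simp
  next
    case c3
    define m where "m = i - length xs - 2"
    have i: "i = length xs + 2 + m" using c3 m_def by simp
    show ?thesis unfolding i by (simp add: take_append add.assoc)
  qed
qed

definition fsw :: "nat \<Rightarrow> nat \<Rightarrow> nat \<Rightarrow> nat \<Rightarrow> nat" where
  "fsw s a b u = (if s < u \<and> u \<le> s + a then u + b else if s + a < u \<and> u \<le> s + a + b then u - a else u)"

definition psw :: "nat \<Rightarrow> nat \<Rightarrow> nat" where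
  "psw l i = (if i = l then Suc l else if i = Suc l then l else i)"

lemma in_block_swap:
  assumes "in_block (xs @ a # b # ys) i u"
  shows "in_block (xs @ b # a # ys) (psw (length xs) i) (fsw (sum_list xs) a b u)"
proof -
  let ?l = "length xs" and ?s = "sum_list xs"
  have tx: "sum_list (take j xs) \<le> ?s" for j
  proof -
    have "sum_list (take j xs) \<le> sum_list (take j xs) + sum_list (drop j xs)" by simp
    also have "\<dots> = ?s" by (metis sum_list_append append_take_drop_id)
    finally show ?thesis .
  qed
  have ib: "sum_list (take i (xs @ a # b # ys)) < u" "u \<le> sum_list (take (Suc i) (xs @ a # b # ys))"
    using assms unfolding in_block_def by auto
  consider (c1) "Suc i \<le> ?l" | (c2) "i = ?l" | (c3) "i = Suc ?l" | (c4) "i > Suc ?l" by linarith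
  then show ?thesis
  proof cases
    case c1
    have lo: "sum_list (take i xs) < u" "u \<le> sum_list (take (Suc i) xs)" using ib c1 unfolding take_sum_swap by auto
    then have "u \<le> ?s" using tx[of "Suc i"] by linarith
    then have f: "fsw ?s a b u = u" unfolding fsw_def by auto
    have p: "psw ?l i = i" using c1 unfolding psw_def by auto
    show ?thesis unfolding in_block_def f p take_sum_swap using c1 lo by auto
  next
    case c2
    have lo: "?s < u" "u \<le> ?s + a" using ib c2 unfolding take_sum_swap by auto
    then have f: "fsw ?s a b u = u + b" unfolding fsw_def by auto
    have p: "psw ?l i = Suc ?l" using c2 unfolding psw_def by auto
    show ?thesis unfolding in_block_def f p take_sum_swap using lo by auto
  next
    case c3
    have lo: "?s + a < u" "u \<le> ?s + a + b" using ib c3 unfolding take_sum_swap by auto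
    then have f: "fsw ?s a b u = u - a" unfolding fsw_def by auto
    have p: "psw ?l i = ?l" using c3 unfolding psw_def by auto
    show ?thesis unfolding in_block_def f p take_sum_swap using lo by auto
  next
    case c4
    have lo: "?s + a + b + sum_list (take (i - ?l - 2) ys) < u" "u \<le> ?s + a + b + sum_list (take (Suc i - ?l - 2) ys)"
      using ib c4 unfolding take_sum_swap by auto
    then have f: "fsw ?s a b u = u" unfolding fsw_def by auto
    have p: "psw ?l i = i" using c4 unfolding psw_def by auto
    show ?thesis unfolding in_block_def f p take_sum_swap using lo c4 by (auto simp: add_ac)
  qed
qed

lemma fsw_inv: "fsw s b a (fsw s a b u) = (u::nat)"
proof (cases "s < u \<and> u \<le> s + a")
  case True then show ?thesis unfolding fsw_def by simp
next
  case f1: False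
  show ?thesis
  proof (cases "s + a < u \<and> u \<le> s + a + b")
    case True
    then have "s < u - a" "u - a \<le> s + b" "u - a + a = u" by linarith+
    have e1: "fsw s a b u = u - a" using f1 True unfolding fsw_def by simp
    have e2: "fsw s b a (u - a) = u - a + a" unfolding fsw_def
      by (rule if_P) (use \<open>s < u - a\<close> \<open>u - a \<le> s + b\<close> in simp)
    show ?thesis using e1 e2 \<open>u - a + a = u\<close> by simp
  next
    case False
    then have o: "u \<le> s \<or> s + a + b < u" using f1 by auto
    then have "fsw s a b u = u" unfolding fsw_def by auto
    moreover have "fsw s b a u = u" using o unfolding fsw_def by auto
    ultimately show ?thesis by simp
  qed
qed

lemma fsw_zero: "fsw s a b u = 0 \<longleftrightarrow> u = 0"
  unfolding fsw_def by auto

lemma fsw_bound: "u \<le> s + a + b + c \<Longrightarrow> fsw s a b u \<le> s + a + b + c"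
  unfolding fsw_def by auto

lemma psw_len: "i < length (xs @ a # b # ys) \<Longrightarrow> psw (length xs) i < length (xs @ b # a # ys)"
  unfolding psw_def by auto

lemma iso_swap:
  "graph_iso (Suc (sum_list (xs @ a # b # ys))) (K_adj (xs @ a # b # ys)) (K_adj (xs @ b # a # ys))"
proof -
  let ?L = "xs @ a # b # ys" and ?L' = "xs @ b # a # ys"
  let ?n = "Suc (sum_list ?L)" and ?s = "sum_list xs" and ?c = "sum_list ys"
  let ?f = "fsw ?s a b" and ?g = "fsw ?s b a"
  have n: "?n = Suc (?s + a + b + ?c)" by simp
  have gf: "?g (?f u) = u" for u by (rule fsw_inv)
  have fg: "?f (?g u) = u" for u by (rule fsw_inv)
  have fr: "?f u < ?n" if "u < ?n" for u
    using fsw_bound[of u ?s a b ?c] that by simp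
  have gr: "?g u < ?n" if "u < ?n" for u
    using fsw_bound[of u ?s b a ?c] that by (simp add: add_ac)
  have bij: "bij_betw ?f {0..<?n} {0..<?n}"
    by (rule bij_betw_byWitness[where f' = ?g]) (use gf fg fr gr in auto)
  have blk: "(\<exists>i<length ?L. in_block ?L i u \<and> in_block ?L i v) \<longleftrightarrow>
             (\<exists>i<length ?L'. in_block ?L' i (?f u) \<and> in_block ?L' i (?f v))" for u v
  proof
    assume "\<exists>i<length ?L. in_block ?L i u \<and> in_block ?L i v"
    then obtain i where "i < length ?L" "in_block ?L i u" "in_block ?L i v" by blast
    then have "psw (length xs) i < length ?L'" "in_block ?L' (psw (length xs) i) (?f u)" "in_block ?L' (psw (length xs) i) (?f v)"
      using in_block_swap[of xs a b ys i u] in_block_swap[of xs a b ys i v] psw_len[of i xs a b ys] by auto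
    then show "\<exists>i<length ?L'. in_block ?L' i (?f u) \<and> in_block ?L' i (?f v)" by blast
  next
    assume "\<exists>i<length ?L'. in_block ?L' i (?f u) \<and> in_block ?L' i (?f v)"
    then obtain i where i: "i < length ?L'" "in_block ?L' i (?f u)" "in_block ?L' i (?f v)" by blast
    have "in_block ?L (psw (length xs) i) (?g (?f u))" "in_block ?L (psw (length xs) i) (?g (?f v))"
      using in_block_swap[OF i(2)] in_block_swap[OF i(3)] by auto
    moreover have "psw (length xs) i < length ?L" using psw_len[of i xs b a ys] i(1) by simp
    ultimately show "\<exists>i<length ?L. in_block ?L i u \<and> in_block ?L i v" unfolding gf by blast
  qed
  have adj: "K_adj ?L u v \<longleftrightarrow> K_adj ?L' (?f u) (?f v)" for u v
  proof -
    have "?f u = ?f v \<longleftrightarrow> u = v"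
    proof
      assume "?f u = ?f v"
      then have "?g (?f u) = ?g (?f v)" by simp
      then show "u = v" unfolding gf .
    qed simp
    moreover have "?f u = 0 \<longleftrightarrow> u = 0" "?f v = 0 \<longleftrightarrow> v = 0" by (rule fsw_zero)+
    ultimately show ?thesis unfolding K_adj_def using blk[of u v] by simp
  qed
  show ?thesis unfolding graph_iso_def by (rule exI[of _ ?f]) (use bij adj in simp)
qed

definition swp :: "nat list \<Rightarrow> nat list \<Rightarrow> bool" where
  "swp xs ys \<longleftrightarrow> (\<exists>p a b q. xs = p @ a # b # q \<and> ys = p @ b # a # q)"

lemma swp_iso: "swp xs ys \<Longrightarrow> graph_iso (Suc (sum_list xs)) (K_adj xs) (K_adj ys) \<and> sum_list xs = sum_list ys"
  unfolding swp_def using iso_swap by auto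

lemma swps_iso: "swp\<^sup>*\<^sup>* xs ys \<Longrightarrow> graph_iso (Suc (sum_list xs)) (K_adj xs) (K_adj ys) \<and> sum_list xs = sum_list ys"
proof (induction rule: rtranclp_induct)
  case base then show ?case by (simp add: iso_refl)
next
  case (step y z)
  then show ?case using swp_iso[OF step(2)] iso_trans by metis
qed

lemma swp_cons: "swp xs ys \<Longrightarrow> swp (c # xs) (c # ys)"
  unfolding swp_def by (metis append_Cons)

lemma swps_cons: "swp\<^sup>*\<^sup>* xs ys \<Longrightarrow> swp\<^sup>*\<^sup>* (c # xs) (c # ys)"
proof (induction rule: rtranclp_induct)
  case base then show ?case by simp
next
  case (step y z)
  then show ?case using swp_cons by (meson rtranclp.rtrancl_into_rtrancl)
qed

lemma swps_move: "swp\<^sup>*\<^sup>* (a # ys1 @ ys2) (ys1 @ a # ys2)"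
proof (induction ys1)
  case Nil then show ?case by simp
next
  case (Cons c ys1)
  have "swp (a # c # ys1 @ ys2) (c # a # ys1 @ ys2)" unfolding swp_def
    by (rule exI[of _ "[]"]) auto
  moreover have "swp\<^sup>*\<^sup>* (c # a # ys1 @ ys2) (c # ys1 @ a # ys2)" using swps_cons[OF Cons.IH] .
  ultimately show ?case by simp
qed

lemma mset_swps: "mset ns = mset ms \<Longrightarrow> swp\<^sup>*\<^sup>* ns ms"
proof (induction ns arbitrary: ms)
  case Nil then show ?case by simp
next
  case (Cons a ns)
  then have "a \<in> set ms" by (metis list.set_intros(1) set_mset_mset)
  then obtain ys1 ys2 where ms: "ms = ys1 @ a # ys2" by (meson split_list)
  then have "mset ns = mset (ys1 @ ys2)" using Cons.prems by simp
  then have "swp\<^sup>*\<^sup>* ns (ys1 @ ys2)" by (rule Cons.IH)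
  then have "swp\<^sup>*\<^sup>* (a # ns) (a # ys1 @ ys2)" by (rule swps_cons)
  then show ?case unfolding ms using swps_move by (meson rtranclp_trans)
qed

lemma mset_iso: "mset ns = mset ms \<Longrightarrow> graph_iso (Suc (sum_list ns)) (K_adj ns) (K_adj ms)"
  using mset_swps swps_iso by blast

theorem theorem3p5:
  fixes n :: nat and ns ms :: "nat list"
  assumes "ns \<in> K_family n" and "ms \<in> K_family n"
    and "D_cospectral n (K_adj ns) (K_adj ms)"
  shows "graph_iso n (K_adj ns) (K_adj ms)"
proof -
  have cp: "char_poly (dist_matrix n (K_adj ns)) = char_poly (dist_matrix n (K_adj ms))"
    using assms(3) unfolding D_cospectral_def .
  have "mset ns = mset ms"
  proof (rule recover[OF assms(1) assms(2)])
    fix t :: real assume t: "t > 0"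
    show "t ^ (n - length ns - 1) * poly (Fp ns) t = t ^ (n - length ms - 1) * poly (Fp ms) t"
      using charpoly_K[OF assms(1) t] charpoly_K[OF assms(2) t] cp by simp
  qed
  then have "graph_iso (Suc (sum_list ns)) (K_adj ns) (K_adj ms)" by (rule mset_iso)
  moreover have "Suc (sum_list ns) = n" using assms(1) by (simp add: K_family_def)
  ultimately show ?thesis by simp
qed

end
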